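(* Let $\lambda>1$, $s'\in(0,1]$, $r\in\mathbb{R}$, $a=r+\ln s'$, and $0<b\le\frac{\lambda-1}{\lambda}e^{1/(\lambda-1)}-1$ with $(\lambda-1)[1-\ln(\lambda-1)+\ln(b+1)]\le a\le\lambda-(\lambda-1)\ln\lambda$. Let $x^*$ be the smallest positive solution of $x=x^\lambda e^{a-(b+1)x}$. For the system $x_{n+1}=s'y_n$, $y_{n+1}=x_n^{\lambda}e^{r-bx_{n+1}-x_n}$ ($n\ge0$) on $[0,\infty)^2$, let $E$ be the set of initial points $(x_0,y_0)\in[0,\infty)^2$ whose orbit converges to $(0,0)$, and let $E_0$ be the connected component of $E$ containing $(0,0)$. Then $E_0\subsetneq[0,x^* )\times[0,x^*/s')$. *)

theory Defs
  imports "HOL-Analysis.Analysis"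
begin

definition sysmap :: "real \<Rightarrow> real \<Rightarrow> real \<Rightarrow> real \<Rightarrow> real \<times> real \<Rightarrow> real \<times> real" where
  "sysmap lam s' r b p = (s' * snd p, (fst p) powr lam * exp (r - b * (s' * snd p) - fst p))"

definition basin0 :: "real \<Rightarrow> real \<Rightarrow> real \<Rightarrow> real \<Rightarrow> (real \<times> real) set" where
  "basin0 lam s' r b = {p. 0 \<le> fst p \<and> 0 \<le> snd p \<and>
      (\<lambda>n. (sysmap lam s' r b ^^ n) p) \<longlonglongrightarrow> (0, 0)}"

end

theory Submission imports Defs "HOL-Analysis.Analysis" begin

lemma xs_le:
  fixes lam a b xs :: real
  assumes lam: "lam > 1" and b: "0 < b"
    and a_lo: "(lam - 1) * (1 - ln (lam - 1) + ln (b + 1)) \<le> a"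
    and xs_pos: "xs > 0"
    and xs_min: "\<And>x. 0 < x \<Longrightarrow> x < xs \<Longrightarrow> x \<noteq> x powr lam * exp (a - (b + 1) * x)"
  shows "xs \<le> (lam - 1) / (b + 1)"
proof (rule ccontr)
  assume H: "\<not> ?thesis"
  define c where "c = (lam - 1) / (b + 1)"
  define \<psi> where "\<psi> x = x powr lam * exp (a - (b + 1) * x) - x" for x
  have cpos: "c > 0" using lam b by (simp add: c_def)
  have bc: "(b + 1) * c = lam - 1" using b by (simp add: c_def)
  have lnc: "ln c = ln (lam - 1) - ln (b + 1)" using lam b by (simp add: c_def ln_div)
  have "\<psi> c \<ge> 0"
  proof -
    have "c powr lam * exp (a - (b + 1) * c) = exp (lam * ln c + a - (b + 1) * c)"
      using cpos by (simp add: powr_def exp_add[symmetric] exp_diff)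
    moreover have "lam * ln c + a - (b + 1) * c \<ge> ln c"
    proof -
      have "lam * ln c - ln c = (lam - 1) * (ln (lam - 1) - ln (b + 1))" by (simp add: lnc algebra_simps)
      moreover have "(lam - 1) * (1 - ln (lam - 1) + ln (b + 1)) = (lam - 1) - (lam - 1) * (ln (lam - 1) - ln (b + 1))"
        by (simp add: algebra_simps)
      ultimately show ?thesis using a_lo bc by linarith
    qed
    ultimately have "c powr lam * exp (a - (b + 1) * c) \<ge> exp (ln c)" by simp
    thus ?thesis using cpos by (simp add: \<psi>_def)
  qed
  define e where "e = min c (exp (-(\<bar>a\<bar> + 1) / (lam - 1)))"
  have epos: "e > 0" using cpos by (simp add: e_def)
  have "ln e \<le> -(\<bar>a\<bar> + 1) / (lam - 1)"
  proof -
    have "e \<le> exp (-(\<bar>a\<bar> + 1) / (lam - 1))" by (simp add: e_def)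
    hence "ln e \<le> ln (exp (-(\<bar>a\<bar> + 1) / (lam - 1)))" using epos by (subst ln_le_cancel_iff) auto
    thus ?thesis by simp
  qed
  hence "(lam - 1) * ln e \<le> -(\<bar>a\<bar> + 1)" using lam by (simp add: field_simps)
  hence lt: "lam * ln e + a - (b + 1) * e < ln e" using mult_pos_pos[OF b epos] abs_ge_self[of a] epos
    by (simp add: algebra_simps)
  have "\<psi> e < 0"
  proof -
    have "e powr lam * exp (a - (b + 1) * e) = exp (lam * ln e + a - (b + 1) * e)"
      using epos by (simp add: powr_def exp_add[symmetric] exp_diff)
    also have "\<dots> < exp (ln e)" using lt by simp
    finally show ?thesis using epos by (simp add: \<psi>_def)
  qed
  have ec: "e \<le> c" by (simp add: e_def)
  have cont: "continuous_on {e..c} \<psi>"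
    unfolding \<psi>_def using epos by (intro continuous_intros) auto
  obtain x where x: "e \<le> x" "x \<le> c" "\<psi> x = 0"
    using IVT'[of \<psi> e 0 c] \<open>\<psi> e < 0\<close> \<open>\<psi> c \<ge> 0\<close> ec cont by auto
  have "x < xs" using x H c_def by simp
  moreover have "x > 0" using x epos by simp
  ultimately have "x \<noteq> x powr lam * exp (a - (b + 1) * x)" using xs_min by blast
  thus False using x(3) by (simp add: \<psi>_def)
qed

lemma F_le:
  fixes lam a b x v :: real
  assumes lam: "lam > 1" and a_hi: "a \<le> lam - (lam - 1) * ln lam"
    and x: "0 \<le> x" and b: "0 \<le> b" and v: "0 \<le> v"
  shows "x powr lam * exp (a - b * v - x) \<le> lam"
proof (cases "x = 0")
  case True thus ?thesis using lam by simp
next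
  case False
  hence xp: "x > 0" using x by simp
  have "ln (x / lam) \<le> x / lam - 1" using xp lam by (intro ln_le_minus_one) simp
  hence "lam * ln (x / lam) \<le> lam * (x / lam - 1)" using lam by (intro mult_left_mono) auto
  hence "lam * ln x - lam * ln lam \<le> x - lam" using xp lam by (simp add: ln_div algebra_simps)
  hence e: "lam * ln x + a - b * v - x \<le> ln lam" using a_hi mult_nonneg_nonneg[OF b v]
    by (simp add: algebra_simps)
  have "x powr lam * exp (a - b * v - x) = exp (lam * ln x + a - b * v - x)"
    using xp by (simp add: powr_def exp_add[symmetric] exp_diff)
  also have "\<dots> \<le> exp (ln lam)" using e by simp
  finally show ?thesis using lam by simp
qed

lemma F_ge:
  fixes lam a b x v xs :: real
  assumes lam: "lam > 1" and xs: "0 < xs" "xs \<le> x" "x \<le> lam"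
    and b: "0 \<le> b" and v: "v \<le> xs"
    and xs_sol: "xs = xs powr lam * exp (a - (b + 1) * xs)"
  shows "xs \<le> x powr lam * exp (a - b * v - x)"
proof -
  have xp: "x > 0" using xs by simp
  have "ln (xs / x) \<le> xs / x - 1" using xp xs by (intro ln_le_minus_one) simp
  hence "lam * (1 - xs / x) \<le> lam * (ln x - ln xs)" using lam xp xs
    by (intro mult_left_mono) (auto simp: ln_div)
  moreover have "x - xs \<le> lam * (1 - xs / x)"
  proof -
    have "x * (x - xs) \<le> lam * (x - xs)" using xs by (intro mult_right_mono) auto
    hence "(x - xs) \<le> lam * (x - xs) / x" using xp by (simp add: field_simps)
    also have "\<dots> = lam * (1 - xs / x)" using xp by (simp add: field_simps)
    finally show ?thesis .
  qed
  ultimately have e: "lam * ln xs + a - (b + 1) * xs \<le> lam * ln x + a - b * v - x"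
    using mult_left_mono[OF v b] by (simp add: algebra_simps)
  have "xs = exp (lam * ln xs + a - (b + 1) * xs)"
    using xs_sol xs by (simp add: powr_def exp_add[symmetric] exp_diff)
  also have "\<dots> \<le> exp (lam * ln x + a - b * v - x)" using e by simp
  also have "\<dots> = x powr lam * exp (a - b * v - x)"
    using xp by (simp add: powr_def exp_add[symmetric] exp_diff)
  finally show ?thesis .
qed

lemma nonconv:
  fixes X :: "nat \<Rightarrow> real \<times> real" and s' xs :: real
  assumes "\<And>n. xs \<le> fst (X n) \<or> xs \<le> s' * snd (X n)" and "xs > 0"
  shows "\<not> X \<longlonglongrightarrow> (0, 0)"
proof
  assume L: "X \<longlonglongrightarrow> (0, 0)"
  have L1: "(\<lambda>n. fst (X n)) \<longlonglongrightarrow> 0" using tendsto_fst[OF L] by simp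
  have L2: "(\<lambda>n. snd (X n)) \<longlonglongrightarrow> 0" using tendsto_snd[OF L] by simp
  have "(\<lambda>n. max (fst (X n)) (s' * snd (X n))) \<longlonglongrightarrow> max 0 (s' * 0)"
    by (intro tendsto_intros L1 L2)
  hence "eventually (\<lambda>n. max (fst (X n)) (s' * snd (X n)) < xs) sequentially"
    using assms(2) by (intro order_tendstoD(2)) auto
  then obtain N where "\<And>n. n \<ge> N \<Longrightarrow> max (fst (X n)) (s' * snd (X n)) < xs"
    by (auto simp: eventually_sequentially)
  from this[of N] assms(1)[of N] show False by auto
qed

theorem mainTheorem12:
  fixes lam s' r a b xs :: real
  assumes lam: "lam > 1"
    and s': "0 < s'" "s' \<le> 1"
    and a_def: "a = r + ln s'"
    and b: "0 < b" "b \<le> (lam - 1) / lam * exp (1 / (lam - 1)) - 1"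
    and a_lo: "(lam - 1) * (1 - ln (lam - 1) + ln (b + 1)) \<le> a"
    and a_hi: "a \<le> lam - (lam - 1) * ln lam"
    and xs_pos: "xs > 0"
    and xs_sol: "xs = xs powr lam * exp (a - (b + 1) * xs)"
    and xs_min: "\<And>x. 0 < x \<Longrightarrow> x < xs \<Longrightarrow> x \<noteq> x powr lam * exp (a - (b + 1) * x)"
  shows "connected_component_set (basin0 lam s' r b) (0, 0) \<subset> {0..<xs} \<times> {0..<xs / s'}"
proof -
  define T where "T = sysmap lam s' r b"
  define E where "E = basin0 lam s' r b"
  define E0 where "E0 = connected_component_set E (0, 0)"
  define Om where "Om = {p. 0 \<le> fst p \<and> fst p \<le> lam \<and> 0 \<le> s' * snd p \<and> s' * snd p \<le> lam
      \<and> (xs \<le> fst p \<or> xs \<le> s' * snd p)}"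
  have xs_lam: "xs \<le> lam"
    using xs_le[OF lam b(1) a_lo xs_pos xs_min] lam b(1)
      divide_left_mono[of 1 "b + 1" "lam - 1"] by simp
  have key: "s' * (x powr lam * exp (r - b * v - x)) = x powr lam * exp (a - b * v - x)" for x v
    using s'(1) by (simp add: a_def exp_diff exp_add)
  have Tp: "T p = (s' * snd p, fst p powr lam * exp (r - b * (s' * snd p) - fst p))" for p
    by (simp add: T_def sysmap_def)
  have step: "T p \<in> Om" if p: "p \<in> Om" for p
  proof -
    obtain x y where pxy: "p = (x, y)" by fastforce
    define v where "v = s' * y"
    have h: "0 \<le> x" "x \<le> lam" "0 \<le> v" "v \<le> lam" "xs \<le> x \<or> xs \<le> v"
      using p by (auto simp: Om_def pxy v_def)
    have Tq: "T p = (v, x powr lam * exp (r - b * v - x))" by (simp add: Tp pxy v_def)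
    have k: "s' * (x powr lam * exp (r - b * v - x)) = x powr lam * exp (a - b * v - x)"
      by (rule key)
    have le: "x powr lam * exp (a - b * v - x) \<le> lam"
      using F_le[OF lam a_hi h(1)] b(1) h(3) by simp
    have ge: "xs \<le> x powr lam * exp (a - b * v - x)" if "v < xs"
    proof -
      have "xs \<le> x" using h(5) that by simp
      thus ?thesis using F_ge[OF lam xs_pos _ h(2), of b v a] b(1) that xs_sol by simp
    qed
    have nn: "0 \<le> x powr lam * exp (a - b * v - x)" by simp
    have "xs \<le> v \<or> xs \<le> x powr lam * exp (a - b * v - x)" using ge by linarith
    thus ?thesis using h le nn unfolding Tq Om_def fst_conv snd_conv k mem_Collect_eq by blast
  qed
  have orbit: "(T ^^ n) p \<in> Om" if "p \<in> Om" for n p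
    using that by (induction n) (auto intro: step)
  have notE: "p \<notin> E" if "p \<in> Om" for p
  proof
    assume "p \<in> E"
    hence "(\<lambda>n. (T ^^ n) p) \<longlonglongrightarrow> (0, 0)" by (simp add: E_def basin0_def T_def)
    moreover have "xs \<le> fst ((T ^^ n) p) \<or> xs \<le> s' * snd ((T ^^ n) p)" for n
      using orbit[OF that, of n] by (simp add: Om_def)
    ultimately show False using nonconv[of xs "\<lambda>n. (T ^^ n) p" s'] xs_pos by blast
  qed
  have T0: "T (0, 0) = (0, 0)" by (simp add: Tp)
  have "(T ^^ n) (0, 0) = (0, 0)" for n by (induction n) (simp_all add: T0)
  hence zeroE: "(0, 0) \<in> E" by (simp add: E_def basin0_def T_def)
  define U where "U = {p. fst p < xs} \<inter> {p::real\<times>real. s' * snd p < xs}"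
  define V where "V = {p. xs < fst p} \<union> {p::real\<times>real. xs < s' * snd p}"
  have oU: "open U" unfolding U_def
    by (intro open_Int open_Collect_less continuous_intros)
  have oV: "open V" unfolding V_def
    by (intro open_Un open_Collect_less continuous_intros)
  have E_UV: "E \<subseteq> U \<union> V"
  proof
    fix p assume pE: "p \<in> E"
    show "p \<in> U \<union> V"
    proof (rule ccontr)
      assume "p \<notin> U \<union> V"
      hence "fst p \<le> xs" "s' * snd p \<le> xs" "xs \<le> fst p \<or> xs \<le> s' * snd p"
        by (auto simp: U_def V_def)
      moreover have "0 \<le> fst p" "0 \<le> snd p" using pE by (auto simp: E_def basin0_def)
      ultimately have "p \<in> Om" using xs_lam s'(1) by (auto simp: Om_def)
      thus False using notE pE by blast
    qed
  qed
  have E0E: "E0 \<subseteq> E" by (simp add: E0_def connected_component_subset)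
  have conn: "connected E0" by (simp add: E0_def connected_connected_component)
  have zE0: "(0, 0) \<in> E0" using zeroE by (simp add: E0_def)
  have UV: "U \<inter> V \<inter> E0 = {}" by (auto simp: U_def V_def)
  have "U \<inter> E0 = {} \<or> V \<inter> E0 = {}"
    using connectedD[OF conn oU oV UV] E0E E_UV by blast
  moreover have "(0, 0) \<in> U" using xs_pos by (simp add: U_def)
  ultimately have "V \<inter> E0 = {}" using zE0 by blast
  hence E0U: "E0 \<subseteq> U" using E0E E_UV by blast
  have sub: "E0 \<subseteq> {0..<xs} \<times> {0..<xs / s'}"
  proof
    fix p assume pE0: "p \<in> E0"
    hence "p \<in> U" "p \<in> E" using E0U E0E by auto
    thus "p \<in> {0..<xs} \<times> {0..<xs / s'}" using s'(1)
      by (cases p) (auto simp: U_def E_def basin0_def field_simps)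
  qed
  define x0 where "x0 = xs * exp (- b * xs / lam)"
  have x0pos: "0 < x0" and x0le: "x0 \<le> xs" using xs_pos b(1) lam by (auto simp: x0_def)
  have x0lt: "x0 < xs" using xs_pos b(1) lam by (simp add: x0_def)
  have fx0: "xs \<le> x0 powr lam * exp (a - b * 0 - x0)"
  proof -
    have "x0 powr lam = xs powr lam * exp (- b * xs)"
    proof -
      have l: "ln x0 = ln xs - b * xs / lam" using xs_pos by (simp add: x0_def ln_mult)
      have m: "lam * ln x0 = lam * ln xs + - (b * xs)" using l lam by (simp add: field_simps)
      have "x0 powr lam = exp (lam * ln x0)" using x0pos by (simp add: powr_def)
      also have "\<dots> = exp (lam * ln xs) * exp (- (b * xs))" unfolding m by (rule exp_add)
      finally show ?thesis using xs_pos by (simp add: powr_def)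
    qed
    have "exp (a - (b + 1) * xs) \<le> exp (- b * xs) * exp (a - x0)"
      using x0le by (simp add: exp_add[symmetric] algebra_simps)
    hence "xs powr lam * exp (a - (b + 1) * xs) \<le> xs powr lam * (exp (- b * xs) * exp (a - x0))"
      by (intro mult_left_mono) auto
    thus ?thesis using xs_sol \<open>x0 powr lam = _\<close> by (simp add: mult.assoc)
  qed
  have q_notE: "(x0, 0) \<notin> E"
  proof
    assume qE: "(x0, 0) \<in> E"
    have "T (x0, 0) \<in> Om"
    proof -
      have k0: "s' * (x0 powr lam * exp (r - b * 0 - x0)) = x0 powr lam * exp (a - b * 0 - x0)"
        by (rule key)
      have l0: "x0 powr lam * exp (a - b * 0 - x0) \<le> lam"
        using F_le[OF lam a_hi, of x0 b 0] x0pos b(1) by simp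
      have n0: "0 \<le> x0 powr lam * exp (a - b * 0 - x0)" by simp
      have k1: "s' * (x0 powr lam * exp (r - x0)) = x0 powr lam * exp (a - x0)"
        using k0 by simp
      have TT: "T (x0, 0) = (0, x0 powr lam * exp (r - x0))" by (simp add: Tp)
      show ?thesis using fx0 l0 n0 lam unfolding TT Om_def mem_Collect_eq fst_conv snd_conv k1
        by simp
    qed
    hence "\<forall>n. (T ^^ n) (T (x0, 0)) \<in> Om" using orbit by blast
    hence "xs \<le> fst ((T ^^ Suc n) (x0, 0)) \<or> xs \<le> s' * snd ((T ^^ Suc n) (x0, 0))" for n
      by (simp add: Om_def funpow_Suc_right del: funpow.simps)
    hence nc: "\<not> (\<lambda>n. (T ^^ Suc n) (x0, 0)) \<longlonglongrightarrow> (0, 0)"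
      using nonconv[of xs "\<lambda>n. (T ^^ Suc n) (x0, 0)" s'] xs_pos by blast
    have "(\<lambda>n. (T ^^ n) (x0, 0)) \<longlonglongrightarrow> (0, 0)" using qE by (simp add: E_def basin0_def T_def)
    hence "(\<lambda>n. (T ^^ Suc n) (x0, 0)) \<longlonglongrightarrow> (0, 0)" by (rule LIMSEQ_Suc)
    thus False using nc by blast
  qed
  have "(x0, 0) \<in> {0..<xs} \<times> {0..<xs / s'}" using x0pos x0lt xs_pos s'(1) by auto
  moreover have "(x0, 0) \<notin> E0" using q_notE E0E by blast
  ultimately show ?thesis using sub unfolding E0_def E_def by blast
qed

end
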